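(* Let $s\ge r\ge2$, let $Q$ be an $s$-vertex $r$-graph and let $\mathcal P$ be a $Q$-flat hereditary property of $r$-graphs. Then for every $n\ge s$ and every $H\in\mathcal P_n$, $$\mathcal N(Q,H)\le\pi(Q,\mathcal P)\,\frac{n^s}{s!},$$ and for every $p\ge1$, $$\lambda^{(p)}(Q,H)\le\pi(Q,\mathcal P)\,n^{s-s/p}.$$
   Context: An $r$-graph ($r\ge 2$) is a finite hypergraph all of whose edges have exactly $r$ vertices. For $I\subseteq V(H)$, $H[I]$ denotes the induced subhypergraph on $I$. For an $s$-vertex $r$-graph $Q$ and an $r$-graph $H$, $\mathcal N(Q,H)$ is the number of (not necessarily induced) subgraphs of $H$ isomorphic to $Q$. For an $n$-vertex $r$-graph $H$ with vertex set $[n]$ and $\mathbf x\in\mathbb R^n$, $P_{Q,H}(\mathbf x)=s!\sum_{\{i_1,\dots,i_s\}\in\binom{[n]}{s}}\mathcal N(Q,H[\{i_1,\dots,i_s\}])\,x_{i_1}\cdots x_{i_s}$, and for $p\ge1$, $\lambda^{(p)}(Q,H)=\max_{\|\mathbf x\|_p=1}P_{Q,H}(\mathbf x)$. A hereditary property $\mathcal P$ of $r$-graphs is a family of $r$-graphs closed under isomorphism and under taking induced subgraphs; as a standing assumption, whenever $H\in\mathcal P$, the disjoint union of $H$ with an isolated vertex is also in $\mathcal P$. $\mathcal P_n$ is the set of members of $\mathcal P$ with $n$ vertices. $ex(Q,\mathcal P_n)=\max\{\mathcal N(Q,H):H\in\mathcal P_n\}$ and $\pi(Q,\mathcal P)=\lim_{n\to\infty}ex(Q,\mathcal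 P_n)/\binom ns$ (this limit exists). $\lambda^{(p)}(Q,\mathcal P_n)=\max\{\lambda^{(p)}(Q,H):H\in\mathcal P_n\}$ and $\lambda^{(p)}(Q,\mathcal P)=\lim_{n\to\infty}\lambda^{(p)}(Q,\mathcal P_n)n^{s/p-s}$ (this limit exists). $\mathcal P$ is $Q$-flat if $\lambda^{(1)}(Q,\mathcal P)=\pi(Q,\mathcal P)$. *)

theory Defs
  imports Complex_Main
begin

type_synonym hgraph = "nat set \<times> nat set set"

definition rgraph :: "nat \<Rightarrow> hgraph \<Rightarrow> bool" where
  "rgraph r H \<longleftrightarrow> finite (fst H) \<and> (\<forall>e\<in>snd H. e \<subseteq> fst H \<and> card e = r)"

definition hiso :: "hgraph \<Rightarrow> hgraph \<Rightarrow> bool" where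
  "hiso G1 G2 \<longleftrightarrow> (\<exists>f. bij_betw f (fst G1) (fst G2) \<and> (\<lambda>e. f ` e) ` snd G1 = snd G2)"

definition induced :: "hgraph \<Rightarrow> nat set \<Rightarrow> hgraph" where
  "induced H I = (I, {e \<in> snd H. e \<subseteq> I})"

text \<open>Hereditary property of r-graphs, including the standing assumption that adding
  an isolated vertex keeps one inside the property.\<close>
definition hereditary :: "nat \<Rightarrow> hgraph set \<Rightarrow> bool" where
  "hereditary r P \<longleftrightarrow>
     (\<forall>H\<in>P. rgraph r H) \<and>
     (\<forall>H G. H \<in> P \<longrightarrow> hiso H G \<longrightarrow> G \<in> P) \<and>
     (\<forall>H\<in>P. \<forall>I. I \<subseteq> fst H \<longrightarrow> induced H I \<in> P) \<and>
     (\<forall>H\<in>P. \<forall>v. v \<notin> fst H \<longrightarrow> (insert v (fst H), snd H) \<in> P)"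

definition Pn :: "hgraph set \<Rightarrow> nat \<Rightarrow> hgraph set" where
  "Pn P n = {H \<in> P. card (fst H) = n}"

definition ncopies :: "hgraph \<Rightarrow> hgraph \<Rightarrow> nat" where
  "ncopies Q H = card {G. fst G \<subseteq> fst H \<and> snd G \<subseteq> snd H \<and> (\<forall>e\<in>snd G. e \<subseteq> fst G) \<and> hiso G Q}"

definition polyQ :: "hgraph \<Rightarrow> hgraph \<Rightarrow> (nat \<Rightarrow> real) \<Rightarrow> real" where
  "polyQ Q H x = fact (card (fst Q)) *
     (\<Sum>I\<in>{I. I \<subseteq> fst H \<and> card I = card (fst Q)}. real (ncopies Q (induced H I)) * (\<Prod>i\<in>I. x i))"

definition lam :: "real \<Rightarrow> hgraph \<Rightarrow> hgraph \<Rightarrow> real" where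
  "lam p Q H = Sup {polyQ Q H x | x. (\<Sum>i\<in>fst H. \<bar>x i\<bar> powr p) powr (1 / p) = 1}"

definition exQ :: "hgraph \<Rightarrow> hgraph set \<Rightarrow> nat \<Rightarrow> real" where
  "exQ Q P n = Sup {real (ncopies Q H) | H. H \<in> Pn P n}"

definition piQ :: "hgraph \<Rightarrow> hgraph set \<Rightarrow> real" where
  "piQ Q P = lim (\<lambda>n. exQ Q P n / real (n choose card (fst Q)))"

definition lamPn :: "real \<Rightarrow> hgraph \<Rightarrow> hgraph set \<Rightarrow> nat \<Rightarrow> real" where
  "lamPn p Q P n = Sup {lam p Q H | H. H \<in> Pn P n}"

definition lamP :: "real \<Rightarrow> hgraph \<Rightarrow> hgraph set \<Rightarrow> real" where
  "lamP p Q P = lim (\<lambda>n. lamPn p Q P n * real n powr (real (card (fst Q)) / p - real (card (fst Q))))"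

definition flat :: "hgraph \<Rightarrow> hgraph set \<Rightarrow> bool" where
  "flat Q P \<longleftrightarrow> lamP 1 Q P = piQ Q P"

end

theory Submission imports Defs "HOL-Analysis.Analysis" begin

lemma ncopies_le:
  assumes "finite I" "card I = s"
  shows "real (ncopies Q (induced H I)) \<le> 2^s * 2^(2^s)"
proof -
  have sub: "{G. fst G \<subseteq> fst (induced H I) \<and> snd G \<subseteq> snd (induced H I) \<and> (\<forall>e\<in>snd G. e \<subseteq> fst G) \<and> hiso G Q}
     \<subseteq> Pow I \<times> Pow (Pow I)"
    by (auto simp: induced_def)
  have "ncopies Q (induced H I) \<le> card (Pow I \<times> Pow (Pow I))"
    unfolding ncopies_def using sub assms by (intro card_mono) auto
  also have "\<dots> = 2^s * 2^(2^s)" using assms by (simp add: card_cartesian_product card_Pow)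
  finally have "real (ncopies Q (induced H I)) \<le> real (2^s * 2^(2^s))" by (simp only: of_nat_le_iff)
  then show ?thesis by simp
qed

lemma sum_prod_le_exp:
  fixes a :: "nat \<Rightarrow> real"
  assumes "finite V" "\<And>i. i \<in> V \<Longrightarrow> a i \<ge> 0"
  shows "(\<Sum>I\<in>{I. I \<subseteq> V \<and> card I = s}. \<Prod>i\<in>I. a i) \<le> exp (\<Sum>i\<in>V. a i)"
proof -
  have "(\<Sum>I\<in>{I. I \<subseteq> V \<and> card I = s}. \<Prod>i\<in>I. a i) \<le> (\<Sum>I\<in>Pow V. \<Prod>i\<in>I. a i)"
    using assms by (intro sum_mono2) (auto intro!: prod_nonneg)
  also have "\<dots> = (\<Prod>i\<in>V. a i + 1)" using prod_add[OF assms(1), of a "\<lambda>_. 1"] by simp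
  also have "\<dots> \<le> (\<Prod>i\<in>V. exp (a i))"
    using assms by (intro prod_mono) (auto simp: add.commute exp_ge_add_one_self)
  also have "\<dots> = exp (\<Sum>i\<in>V. a i)" using assms(1) by (simp add: exp_sum)
  finally show ?thesis .
qed

definition Bd :: "nat \<Rightarrow> real" where "Bd s = fact s * (2^s * 2^(2^s)) * exp 1"

lemma polyQ_abs_le:
  "polyQ Q H x \<le> polyQ Q H (\<lambda>i. \<bar>x i\<bar>)"
  unfolding polyQ_def
proof (intro mult_left_mono sum_mono)
  fix I
  have "(\<Prod>i\<in>I. x i) \<le> \<bar>\<Prod>i\<in>I. x i\<bar>" by simp
  also have "\<dots> = (\<Prod>i\<in>I. \<bar>x i\<bar>)" by (rule abs_prod)
  finally show "(\<Prod>i\<in>I. x i) \<le> (\<Prod>i\<in>I. \<bar>x i\<bar>)" .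
qed auto

lemma polyQ_bound:
  assumes "finite (fst H)" "(\<Sum>i\<in>fst H. \<bar>x i\<bar>) = 1"
  shows "polyQ Q H x \<le> Bd (card (fst Q))"
proof -
  let ?s = "card (fst Q)"
  let ?Is = "{I. I \<subseteq> fst H \<and> card I = ?s}"
  have "polyQ Q H x \<le> polyQ Q H (\<lambda>i. \<bar>x i\<bar>)" by (rule polyQ_abs_le)
  also have "\<dots> \<le> fact ?s * (\<Sum>I\<in>?Is. (2^?s * 2^(2^?s)) * (\<Prod>i\<in>I. \<bar>x i\<bar>))"
    unfolding polyQ_def
  proof (intro mult_left_mono sum_mono mult_right_mono)
    fix I assume "I \<in> ?Is"
    show "real (ncopies Q (induced H I)) \<le> 2^?s * 2^(2^?s)"
    proof (rule ncopies_le)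
      show "finite I" using \<open>I \<in> ?Is\<close> assms(1) by (metis (mono_tags, lifting) mem_Collect_eq rev_finite_subset)
    qed (use \<open>I \<in> ?Is\<close> in simp)
  qed (auto intro!: prod_nonneg)
  also have "\<dots> = fact ?s * (2^?s * 2^(2^?s)) * (\<Sum>I\<in>?Is. \<Prod>i\<in>I. \<bar>x i\<bar>)"
    by (simp add: sum_distrib_left mult.assoc)
  also have "\<dots> \<le> fact ?s * (2^?s * 2^(2^?s)) * exp (\<Sum>i\<in>fst H. \<bar>x i\<bar>)"
    by (intro mult_left_mono sum_prod_le_exp assms) auto
  finally show ?thesis using assms(2) by (simp add: Bd_def)
qed

lemma feas1_iff: "((\<Sum>i\<in>V. \<bar>x i\<bar> powr 1) powr (1/1) = 1) \<longleftrightarrow> (\<Sum>i\<in>V. \<bar>(x::nat\<Rightarrow>real) i\<bar>) = 1"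
  by (simp add: sum_nonneg)

lemma lam1_props:
  assumes "finite (fst H)" "fst H \<noteq> {}"
  shows "bdd_above {polyQ Q H x | x. (\<Sum>i\<in>fst H. \<bar>x i\<bar> powr 1) powr (1 / 1) = 1}"
    and "{polyQ Q H x | x. (\<Sum>i\<in>fst H. \<bar>x i\<bar> powr 1) powr (1 / 1) = 1} \<noteq> {}"
    and "lam 1 Q H \<le> Bd (card (fst Q))"
    and "(\<Sum>i\<in>fst H. \<bar>x i\<bar>) = 1 \<Longrightarrow> polyQ Q H x \<le> lam 1 Q H"
proof -
  let ?S = "{polyQ Q H x | x. (\<Sum>i\<in>fst H. \<bar>x i\<bar> powr 1) powr (1 / 1) = 1}"
  show bdd: "bdd_above ?S"
    using polyQ_bound[OF assms(1), of _ Q] unfolding bdd_above_def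
    by (intro exI[of _ "Bd (card (fst Q))"]) (auto simp: feas1_iff simp del: powr_one_eq_one)
  obtain v where v: "v \<in> fst H" using assms by auto
  have "(\<Sum>i\<in>fst H. \<bar>(\<lambda>i. if i = v then 1 else 0::real) i\<bar>) = 1"
    using assms(1) v by (simp add: sum.delta)
  then have "polyQ Q H (\<lambda>i. if i = v then 1 else 0::real) \<in> ?S"
    using feas1_iff[where V="fst H" and x="\<lambda>i. if i = v then 1 else 0::real"] by blast
  then show ne: "?S \<noteq> {}" by blast
  show "lam 1 Q H \<le> Bd (card (fst Q))"
    unfolding lam_def using ne polyQ_bound[OF assms(1), of _ Q]
    by (intro cSup_least) (auto simp: feas1_iff simp del: powr_one_eq_one)
  show "(\<Sum>i\<in>fst H. \<bar>x i\<bar>) = 1 \<Longrightarrow> polyQ Q H x \<le> lam 1 Q H"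
    unfolding lam_def using bdd
    by (intro cSup_upper) (auto simp: feas1_iff simp del: powr_one_eq_one)
qed

lemma polyQ_insert:
  assumes "finite (fst H)" "v \<notin> fst H"
  shows "polyQ Q (insert v (fst H), snd H) (x(v:=0)) = polyQ Q H x"
proof -
  let ?s = "card (fst Q)"
  let ?H' = "(insert v (fst H), snd H)"
  have fin: "finite {I. I \<subseteq> insert v (fst H) \<and> card I = ?s}"
    by (rule finite_subset[of _ "Pow (insert v (fst H))"]) (use assms(1) in auto)
  have "(\<Sum>I\<in>{I. I \<subseteq> insert v (fst H) \<and> card I = ?s}. real (ncopies Q (induced ?H' I)) * (\<Prod>i\<in>I. (x(v:=0)) i))
      = (\<Sum>I\<in>{I. I \<subseteq> fst H \<and> card I = ?s}. real (ncopies Q (induced ?H' I)) * (\<Prod>i\<in>I. (x(v:=0)) i))"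
  proof (rule sum.mono_neutral_right[OF fin])
    show "\<forall>I\<in>{I. I \<subseteq> insert v (fst H) \<and> card I = ?s} - {I. I \<subseteq> fst H \<and> card I = ?s}.
        real (ncopies Q (induced ?H' I)) * (\<Prod>i\<in>I. (x(v:=0)) i) = 0"
    proof
      fix I assume I: "I \<in> {I. I \<subseteq> insert v (fst H) \<and> card I = ?s} - {I. I \<subseteq> fst H \<and> card I = ?s}"
      then have vI: "v \<in> I" by auto
      have "I \<subseteq> insert v (fst H)" using I by simp
      then have finI: "finite I" using assms(1) by (metis finite_insert rev_finite_subset)
      have "(\<Prod>i\<in>I. (x(v:=0)) i) = 0" using vI finI by (intro prod_zero) auto
      then show "real (ncopies Q (induced ?H' I)) * (\<Prod>i\<in>I. (x(v:=0)) i) = 0" by simp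
    qed
  qed auto
  also have "\<dots> = (\<Sum>I\<in>{I. I \<subseteq> fst H \<and> card I = ?s}. real (ncopies Q (induced H I)) * (\<Prod>i\<in>I. x i))"
  proof (rule sum.cong[OF refl])
    fix I assume I: "I \<in> {I. I \<subseteq> fst H \<and> card I = ?s}"
    have "induced ?H' I = induced H I" by (simp add: induced_def)
    moreover have "(\<Prod>i\<in>I. (x(v:=0)) i) = (\<Prod>i\<in>I. x i)"
      using I assms(2) by (intro prod.cong) auto
    ultimately show "real (ncopies Q (induced ?H' I)) * (\<Prod>i\<in>I. (x(v:=0)) i) = real (ncopies Q (induced H I)) * (\<Prod>i\<in>I. x i)"
      by simp
  qed
  finally show ?thesis by (simp add: polyQ_def)
qed

lemma lam1_mono:
  assumes "finite (fst H)" "fst H \<noteq> {}" "v \<notin> fst H"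
  shows "lam 1 Q H \<le> lam 1 Q (insert v (fst H), snd H)"
proof -
  let ?H' = "(insert v (fst H), snd H)"
  have fin': "finite (fst ?H')" and ne': "fst ?H' \<noteq> {}" using assms by simp_all
  show ?thesis unfolding lam_def[of 1 Q H]
  proof (rule cSup_least)
    show "{polyQ Q H x | x. (\<Sum>i\<in>fst H. \<bar>x i\<bar> powr 1) powr (1 / 1) = 1} \<noteq> {}"
      using lam1_props(2)[OF assms(1,2)] .
    fix y assume "y \<in> {polyQ Q H x | x. (\<Sum>i\<in>fst H. \<bar>x i\<bar> powr 1) powr (1 / 1) = 1}"
    then obtain x where y: "y = polyQ Q H x" and fx: "(\<Sum>i\<in>fst H. \<bar>x i\<bar>) = 1"
      by (auto simp: feas1_iff simp del: powr_one_eq_one)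
    have e: "(\<Sum>i\<in>fst H. \<bar>(x(v:=0)) i\<bar>) = (\<Sum>i\<in>fst H. \<bar>x i\<bar>)"
      by (rule sum.cong) (use assms in auto)
    have "(\<Sum>i\<in>fst ?H'. \<bar>(x(v:=0)) i\<bar>) = 1" using assms fx e by simp
    then show "y \<le> lam 1 Q ?H'" using lam1_props(4)[OF fin' ne'] polyQ_insert[OF assms(1,3)] y by metis
  qed
qed

lemma Pn_ne:
  assumes her: "hereditary r P" and H: "H \<in> P" and n: "card (fst H) \<le> n"
  shows "\<exists>G\<in>P. card (fst G) = n"
  using n
proof (induction n rule: dec_induct)
  case base then show ?case using H by blast
next
  case (step n)
  then obtain G where G: "G \<in> P" "card (fst G) = n" by blast
  have fin: "finite (fst G)" using her G by (auto simp: hereditary_def rgraph_def)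
  obtain v where v: "v \<notin> fst G" using ex_new_if_finite[OF infinite_UNIV_nat fin] by auto
  have "(insert v (fst G), snd G) \<in> P" using her G v by (auto simp: hereditary_def)
  moreover have "card (fst (insert v (fst G), snd G)) = Suc n" using fin v G by simp
  ultimately show ?case by blast
qed

lemma lam1_le_pi:
  assumes her: "hereditary r P" and fl: "flat Q P" and H: "H \<in> P" and m1: "card (fst H) \<ge> 1"
  shows "lam 1 Q H \<le> piQ Q P"
proof -
  define m where "m = card (fst H)"
  define f where "f n = lamPn 1 Q P n" for n
  let ?B = "Bd (card (fst Q))"
  have fin: "\<And>G. G \<in> P \<Longrightarrow> finite (fst G)" using her by (auto simp: hereditary_def rgraph_def)
  have ne: "{lam 1 Q G | G. G \<in> Pn P n} \<noteq> {}" if "m \<le> n" for n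
    using Pn_ne[OF her H, of n] that by (auto simp: Pn_def m_def)
  have bnd: "lam 1 Q G \<le> ?B" if "m \<le> n" "G \<in> Pn P n" for n G
  proof -
    have "G \<in> P" "card (fst G) = n" using that by (auto simp: Pn_def)
    moreover have "fst G \<noteq> {}" using that m1 calculation by (auto simp: m_def)
    ultimately show ?thesis using lam1_props(3) fin by blast
  qed
  have bdd: "bdd_above {lam 1 Q G | G. G \<in> Pn P n}" if "m \<le> n" for n
    unfolding bdd_above_def using bnd[OF that] by (intro exI[of _ ?B]) auto
  have upper: "lam 1 Q G \<le> f n" if "m \<le> n" "G \<in> Pn P n" for n G
    unfolding f_def lamPn_def by (rule cSup_upper[OF _ bdd[OF that(1)]]) (use that in blast)
  have fB: "f n \<le> ?B" if "m \<le> n" for n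
    unfolding f_def lamPn_def using ne[OF that] bnd[OF that] by (intro cSup_least) auto
  have fmono: "f n \<le> f (Suc n)" if n: "m \<le> n" for n
    unfolding f_def[of n] lamPn_def
  proof (rule cSup_least)
    show "{lam 1 Q G | G. G \<in> Pn P n} \<noteq> {}" using ne[OF n] .
    fix y assume "y \<in> {lam 1 Q G | G. G \<in> Pn P n}"
    then obtain G where y: "y = lam 1 Q G" and G: "G \<in> P" "card (fst G) = n" by (auto simp: Pn_def)
    obtain v where v: "v \<notin> fst G" using ex_new_if_finite[OF infinite_UNIV_nat fin[OF G(1)]] by auto
    let ?G' = "(insert v (fst G), snd G)"
    have G': "?G' \<in> Pn P (Suc n)" using her G v fin[OF G(1)] by (auto simp: hereditary_def Pn_def)
    have "fst G \<noteq> {}" using G n m1 by (auto simp: m_def)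
    then have "y \<le> lam 1 Q ?G'" using lam1_mono[OF fin[OF G(1)] _ v] y by blast
    also have "\<dots> \<le> f (Suc n)" using upper[OF _ G'] n by simp
    finally show "y \<le> f (Suc n)" .
  qed
  define g where "g k = f (k + m)" for k
  have inc: "incseq g" unfolding g_def by (rule incseq_SucI) (simp add: fmono)
  have gB: "\<forall>i. g i \<le> ?B" using fB by (simp add: g_def)
  obtain L where gL: "g \<longlonglongrightarrow> L" and gle: "\<forall>i. g i \<le> L"
    using incseq_convergent[OF inc gB] by blast
  have fL: "f \<longlonglongrightarrow> L" using gL unfolding g_def by (rule LIMSEQ_offset)
  have hL: "(\<lambda>n. lamPn 1 Q P n * real n powr (real (card (fst Q)) / 1 - real (card (fst Q)))) \<longlonglongrightarrow> L"
  proof (rule Lim_transform_eventually[OF fL])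
    show "\<forall>\<^sub>F n in sequentially. f n = lamPn 1 Q P n * real n powr (real (card (fst Q)) / 1 - real (card (fst Q)))"
      unfolding eventually_sequentially by (intro exI[of _ 1]) (auto simp: f_def)
  qed
  then have "lamP 1 Q P = L" unfolding lamP_def by (rule limI)
  then have piL: "piQ Q P = L" using fl by (simp add: flat_def)
  have "lam 1 Q H \<le> f m" using upper[of m H] H by (simp add: Pn_def m_def)
  also have "f m = g 0" by (simp add: g_def)
  also have "\<dots> \<le> L" using gle by blast
  finally show ?thesis using piL by simp
qed

lemma hiso_card:
  assumes "hiso G Q"
  shows "card (fst G) = card (fst Q)"
  using assms unfolding hiso_def by (auto intro: bij_betw_same_card)

lemma ncopies_decomp:
  assumes finH: "finite (fst H)"
  shows "real (ncopies Q H) = (\<Sum>I\<in>{I. I \<subseteq> fst H \<and> card I = card (fst Q)}. real (ncopies Q (induced H I)))"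
proof -
  define C where "C H' = {G. fst G \<subseteq> fst H' \<and> snd G \<subseteq> snd H' \<and> (\<forall>e\<in>snd G. e \<subseteq> fst G) \<and> hiso G Q}" for H'
  define Is where "Is = {I. I \<subseteq> fst H \<and> card I = card (fst Q)}"
  have finIs: "finite Is" unfolding Is_def by (rule finite_subset[of _ "Pow (fst H)"]) (use finH in auto)
  have eq: "C H = (\<Union>I\<in>Is. C (induced H I))"
  proof
    show "C H \<subseteq> (\<Union>I\<in>Is. C (induced H I))"
    proof
      fix G assume G: "G \<in> C H"
      have c: "card (fst G) = card (fst Q)" using G hiso_card[of G Q] by (simp add: C_def)
      have s: "fst G \<subseteq> fst H" using G by (simp add: C_def)
      have "fst G \<in> Is" using c s by (simp add: Is_def)
      moreover have "G \<in> C (induced H (fst G))" using G unfolding C_def induced_def by auto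
      ultimately show "G \<in> (\<Union>I\<in>Is. C (induced H I))" by blast
    qed
    show "(\<Union>I\<in>Is. C (induced H I)) \<subseteq> C H" unfolding C_def Is_def induced_def by auto
  qed
  have finC: "\<forall>I\<in>Is. finite (C (induced H I))"
  proof
    fix I assume "I \<in> Is"
    then have "finite I" using finH unfolding Is_def by (metis (mono_tags, lifting) mem_Collect_eq rev_finite_subset)
    then have f: "finite (Pow I \<times> Pow (Pow I))" by simp
    have "C (induced H I) \<subseteq> Pow I \<times> Pow (Pow I)" unfolding C_def induced_def by auto
    then show "finite (C (induced H I))" using f by (rule finite_subset)
  qed
  have fstG: "fst G = I" if "I \<in> Is" "G \<in> C (induced H I)" for I G
  proof -
    have "finite I" using that finH unfolding Is_def by (metis (mono_tags, lifting) mem_Collect_eq rev_finite_subset)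
    moreover have "fst G \<subseteq> I" using that unfolding C_def induced_def by auto
    moreover have "card (fst G) = card I" using that hiso_card[of G Q] unfolding C_def Is_def by simp
    ultimately show ?thesis by (intro card_subset_eq)
  qed
  have disj: "\<forall>I\<in>Is. \<forall>J\<in>Is. I \<noteq> J \<longrightarrow> C (induced H I) \<inter> C (induced H J) = {}"
  proof (intro ballI impI)
    fix I J assume I: "I \<in> Is" and J: "J \<in> Is" and IJ: "I \<noteq> J"
    show "C (induced H I) \<inter> C (induced H J) = {}"
    proof (rule ccontr)
      assume "C (induced H I) \<inter> C (induced H J) \<noteq> {}"
      then obtain G where G1: "G \<in> C (induced H I)" and G2: "G \<in> C (induced H J)" by blast
      have "fst G = I" by (rule fstG[OF I G1])
      moreover have "fst G = J" by (rule fstG[OF J G2])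
      ultimately show False using IJ by simp
    qed
  qed
  have "ncopies Q H = card (C H)" by (simp add: ncopies_def C_def)
  also have "\<dots> = (\<Sum>I\<in>Is. card (C (induced H I)))" unfolding eq by (rule card_UN_disjoint[OF finIs finC disj])
  also have "\<dots> = (\<Sum>I\<in>Is. ncopies Q (induced H I))" by (simp add: ncopies_def C_def)
  finally have "real (ncopies Q H) = real (\<Sum>I\<in>Is. ncopies Q (induced H I))" by simp
  then show ?thesis unfolding Is_def of_nat_sum .
qed

lemma holder1:
  fixes a :: "nat \<Rightarrow> real"
  assumes fin: "finite V" and nn: "\<And>i. i\<in>V \<Longrightarrow> a i \<ge> 0" and p: "p \<ge> 1"
    and s1: "(\<Sum>i\<in>V. a i powr p) = 1"
  shows "(\<Sum>i\<in>V. a i) \<le> real (card V) powr (1 - 1/p)"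
proof -
  define S where "S = {i\<in>V. a i > 0}"
  define k where "k = card S"
  have finS: "finite S" using fin by (simp add: S_def)
  have SV: "S \<subseteq> V" by (auto simp: S_def)
  have z: "\<forall>i\<in>V - S. a i = 0" using nn by (force simp: S_def)
  have sumS: "(\<Sum>i\<in>V. a i) = (\<Sum>i\<in>S. a i)"
    by (rule sum.mono_neutral_right[OF fin SV]) (use z in auto)
  have sumSp: "(\<Sum>i\<in>S. a i powr p) = 1"
    unfolding s1[symmetric] by (rule sum.mono_neutral_right[OF fin SV, symmetric]) (use z in auto)
  have e0: "0 \<le> 1 - 1/p" using p by (simp add: field_simps)
  show ?thesis
  proof (cases "S = {}")
    case True then show ?thesis by (simp add: sumS)
  next
    case False
    hence kpos: "real k > 0" using finS by (simp add: k_def card_gt_0_iff)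
    have conv: "convex_on {0<..} (\<lambda>x. x powr p)" by (rule powr_convex[OF p])
    have "(\<Sum>i\<in>S. (1/real k) *\<^sub>R a i) powr p \<le> (\<Sum>i\<in>S. (1/real k) * a i powr p)"
      by (rule convex_on_sum[OF finS False conv]) (use kpos in \<open>auto simp: k_def S_def\<close>)
    moreover have "(\<Sum>i\<in>S. (1/real k) *\<^sub>R a i) = (\<Sum>i\<in>S. a i) / k"
      by (simp add: sum_divide_distrib)
    moreover have "(\<Sum>i\<in>S. (1/real k) * a i powr p) = 1 / k"
      unfolding sum_distrib_left[symmetric] sumSp by simp
    ultimately have le: "((\<Sum>i\<in>S. a i) / k) powr p \<le> 1 / k" by simp
    define u where "u = (\<Sum>i\<in>S. a i) / k"
    have u0: "u \<ge> 0" unfolding u_def using kpos SV nn by (intro divide_nonneg_pos sum_nonneg) auto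
    have "u = (u powr p) powr (1/p)" using u0 p by (simp add: powr_powr)
    also have "\<dots> \<le> (1/k) powr (1/p)" using le p by (intro powr_mono2) (auto simp: u_def)
    finally have "u \<le> (1/k) powr (1/p)" .
    then have "(\<Sum>i\<in>S. a i) \<le> k * (1/k) powr (1/p)" using kpos by (simp add: u_def field_simps)
    also have "\<dots> = real k powr (1 - 1/p)"
      using kpos by (simp add: powr_diff powr_divide)
    also have "\<dots> \<le> real (card V) powr (1 - 1/p)"
      using e0 card_mono[OF fin SV] by (intro powr_mono2) (auto simp: k_def)
    finally show ?thesis by (simp add: sumS)
  qed
qed

lemma polyQ_hom:
  assumes "t \<noteq> 0"
  shows "polyQ Q H x = t ^ card (fst Q) * polyQ Q H (\<lambda>i. x i / t)"
proof -
  let ?s = "card (fst Q)"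
  have "(\<Sum>I\<in>{I. I \<subseteq> fst H \<and> card I = ?s}. real (ncopies Q (induced H I)) * (\<Prod>i\<in>I. x i))
      = t ^ ?s * (\<Sum>I\<in>{I. I \<subseteq> fst H \<and> card I = ?s}. real (ncopies Q (induced H I)) * (\<Prod>i\<in>I. x i / t))"
    unfolding sum_distrib_left
  proof (rule sum.cong[OF refl])
    fix I assume "I \<in> {I. I \<subseteq> fst H \<and> card I = ?s}"
    then have c: "card I = ?s" by simp
    have "(\<Prod>i\<in>I. x i / t) = (\<Prod>i\<in>I. x i) / t ^ ?s" by (simp add: prod_dividef c)
    then show "real (ncopies Q (induced H I)) * (\<Prod>i\<in>I. x i) = t ^ ?s * (real (ncopies Q (induced H I)) * (\<Prod>i\<in>I. x i / t))"
      using assms by simp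
  qed
  then show ?thesis unfolding polyQ_def by simp
qed

theorem theorem3p12:
  fixes r s :: nat and Q :: hgraph and P :: "hgraph set"
  assumes "2 \<le> r" and "r \<le> s"
    and "rgraph r Q" and "card (fst Q) = s"
    and "hereditary r P" and "flat Q P"
  shows "\<forall>n \<ge> s. \<forall>H \<in> Pn P n.
           real (ncopies Q H) \<le> piQ Q P * real n ^ s / fact s \<and>
           (\<forall>p::real. p \<ge> 1 \<longrightarrow> lam p Q H \<le> piQ Q P * real n powr (real s - real s / p))"
proof (intro allI impI ballI)
  fix n H assume ns: "s \<le> n" and HP: "H \<in> Pn P n"
  have H: "H \<in> P" "card (fst H) = n" using HP by (auto simp: Pn_def)
  have finH: "finite (fst H)" using assms(5) H by (auto simp: hereditary_def rgraph_def)
  have n2: "n \<ge> 2" using assms(1,2) ns by linarith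
  have npos: "real n > 0" using n2 by simp
  have neH: "fst H \<noteq> {}" using H n2 by auto
  have lampi: "lam 1 Q H \<le> piQ Q P" using lam1_le_pi[OF assms(5,6) H(1)] H n2 by simp
  define x0 where "x0 = (\<lambda>i::nat. 1 / real n)"
  have fx0: "(\<Sum>i\<in>fst H. \<bar>x0 i\<bar>) = 1" using H npos by (simp add: x0_def)
  let ?Is = "{I. I \<subseteq> fst H \<and> card I = s}"
  have "polyQ Q H x0 = fact s * (\<Sum>I\<in>?Is. real (ncopies Q (induced H I)) * (1/real n)^s)"
    unfolding polyQ_def x0_def assms(4) by (intro arg_cong[where f="\<lambda>z. fact s * z"] sum.cong) auto
  also have "\<dots> = fact s * ((\<Sum>I\<in>?Is. real (ncopies Q (induced H I))) * (1/real n)^s)"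
    by (simp add: sum_distrib_right)
  also have "\<dots> = fact s * real (ncopies Q H) / real n ^ s"
    using ncopies_decomp[OF finH, of Q] assms(4) by (simp add: power_divide)
  finally have "fact s * real (ncopies Q H) / real n ^ s \<le> piQ Q P"
    using lam1_props(4)[OF finH neH, where Q=Q, OF fx0] lampi by linarith
  then have ineq: "fact s * real (ncopies Q H) \<le> piQ Q P * real n ^ s"
    using npos by (simp add: pos_divide_le_eq)
  have fpos: "(fact s :: real) > 0" by simp
  have part1: "real (ncopies Q H) \<le> piQ Q P * real n ^ s / fact s"
    using ineq fpos by (simp add: pos_le_divide_eq mult.commute)
  have pi0: "0 \<le> piQ Q P"
  proof -
    have "0 \<le> fact s * real (ncopies Q H) / real n ^ s" by simp
    then show ?thesis using \<open>fact s * real (ncopies Q H) / real n ^ s \<le> piQ Q P\<close> by linarith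
  qed
  have part2: "\<forall>p::real. p \<ge> 1 \<longrightarrow> lam p Q H \<le> piQ Q P * real n powr (real s - real s / p)"
  proof (intro allI impI)
    fix p :: real assume p: "p \<ge> 1"
    let ?S = "{polyQ Q H x | x. (\<Sum>i\<in>fst H. \<bar>x i\<bar> powr p) powr (1/p) = 1}"
    obtain v where v: "v \<in> fst H" using neH by auto
    define e where "e = (\<lambda>i. if i = v then 1 else 0::real)"
    have "(\<Sum>i\<in>fst H. \<bar>e i\<bar> powr p) = (\<Sum>i\<in>fst H. if i = v then 1 else 0)"
      by (rule sum.cong) (auto simp: e_def)
    also have "\<dots> = 1" using finH v by simp
    finally have "polyQ Q H e \<in> ?S" by auto
    then have ne: "?S \<noteq> {}" by blast
    show "lam p Q H \<le> piQ Q P * real n powr (real s - real s / p)" unfolding lam_def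
    proof (rule cSup_least[OF ne])
      fix y assume "y \<in> ?S"
      then obtain x where y: "y = polyQ Q H x" and nx: "(\<Sum>i\<in>fst H. \<bar>x i\<bar> powr p) powr (1/p) = 1" by blast
      define a where "a = (\<lambda>i. \<bar>x i\<bar>)"
      define T where "T = (\<Sum>i\<in>fst H. \<bar>x i\<bar> powr p)"
      have T0: "T \<ge> 0" unfolding T_def by (simp add: sum_nonneg)
      have "T \<noteq> 0" using nx by (auto simp: T_def)
      then have "T = (T powr (1/p)) powr p" using T0 p by (simp add: powr_powr)
      then have T1: "T = 1" using nx by (simp add: T_def)
      have sa1: "(\<Sum>i\<in>fst H. a i powr p) = 1" using T1 by (simp add: a_def T_def)
      define t where "t = (\<Sum>i\<in>fst H. a i)"
      have tle: "t \<le> real n powr (1 - 1/p)"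
        using holder1[OF finH _ p sa1] H by (simp add: t_def a_def)
      have tnn: "t \<ge> 0" unfolding t_def a_def by (simp add: sum_nonneg)
      have t0: "t \<noteq> 0"
      proof
        assume "t = 0"
        then have "\<forall>i\<in>fst H. a i = 0" using finH unfolding t_def a_def
          by (subst (asm) sum_nonneg_eq_0_iff) auto
        then have "(\<Sum>i\<in>fst H. a i powr p) = 0" by simp
        then show False using sa1 by simp
      qed
      have tpos: "t > 0" using tnn t0 by simp
      have "y \<le> polyQ Q H a" using y polyQ_abs_le by (simp add: a_def)
      also have "\<dots> = t^s * polyQ Q H (\<lambda>i. a i / t)" using polyQ_hom[OF t0, where Q=Q and H=H and x=a] assms(4) by simp
      also have "\<dots> \<le> t^s * piQ Q P"
      proof (rule mult_left_mono)
        have "(\<Sum>i\<in>fst H. \<bar>a i / t\<bar>) = (\<Sum>i\<in>fst H. a i / t)"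
          using tpos by (intro sum.cong) (auto simp: a_def)
        also have "\<dots> = (\<Sum>i\<in>fst H. a i) / t" by (rule sum_divide_distrib[symmetric])
        also have "\<dots> = 1" using tpos by (simp add: t_def)
        finally have "polyQ Q H (\<lambda>i. a i / t) \<le> lam 1 Q H" by (rule lam1_props(4)[OF finH neH, where Q=Q])
        then show "polyQ Q H (\<lambda>i. a i / t) \<le> piQ Q P" using lampi by linarith
      qed (use tnn in simp)
      also have "\<dots> \<le> (real n powr (1 - 1/p))^s * piQ Q P"
        using tle tnn pi0 by (intro mult_right_mono power_mono) auto
      also have "(real n powr (1 - 1/p))^s = real n powr (real s - real s / p)"
        using npos by (simp add: powr_power right_diff_distrib)
      finally show "y \<le> piQ Q P * real n powr (real s - real s / p)" by (simp add: mult.commute)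
    qed
  qed
  show "real (ncopies Q H) \<le> piQ Q P * real n ^ s / fact s \<and>
           (\<forall>p::real. p \<ge> 1 \<longrightarrow> lam p Q H \<le> piQ Q P * real n powr (real s - real s / p))"
    using part1 part2 by blast
qed

end
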